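(* Let $A_1, C_2\in\mathbb{R}^{n\times m}$ and fix a position $(r,c)$ with $r\in\{1,\dots,n\}$, $c\in\{1,\dots,m\}$. For $j\neq c$ let $d_{rj}=C_2(r,\max(j,c))-C_2(r,\min(j,c))$ denote the pairwise difference in row $r$ of $C_2$ between columns $j$ and $c$. If $d_{rj}<0$ for all $j<c$ and $d_{rj}>0$ for all $j>c$, then the optimization problem $$\min_{E,\phi\in\mathbb{R}^{n\times m}:\ \phi(r,c)=0}\ \|E\|_F^2$$ subject to, for all rows $\gamma,\bar\gamma$ and columns $\sigma,\bar\sigma$: $A_1(\gamma,\sigma)+E(\gamma,\sigma)-A_1(\bar\gamma,\sigma)-E(\bar\gamma,\sigma)=\phi(\gamma,\sigma)-\phi(\bar\gamma,\sigma)$, $C_2(\gamma,\sigma)-C_2(\gamma,\bar\sigma)=\phi(\gamma,\sigma)-\phi(\gamma,\bar\sigma)$, $\phi(\gamma,\sigma)>0$ for all $(\gamma,\sigma)\ne(r,c)$, produces a finite matrix $E$, i.e. there exist real matrices $E,\phi$ satisfying all the constraints, so that $\phi$ is an exact potential for the bimatrix game $(A_1+E,\,C_2)$ with unique global minimum at $(r,c)$.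
   Context: Matrices are indexed by rows (player 1's actions) and columns (player 2's actions); both players are minimizers. $\|\cdot\|_F$ is the Frobenius norm. A matrix $\phi$ is an exact potential for the bimatrix game $(X,Y)$ if $X(\gamma,\sigma)-X(\bar\gamma,\sigma)=\phi(\gamma,\sigma)-\phi(\bar\gamma,\sigma)$ and $Y(\gamma,\sigma)-Y(\gamma,\bar\sigma)=\phi(\gamma,\sigma)-\phi(\gamma,\bar\sigma)$ for all $\gamma,\bar\gamma,\sigma,\bar\sigma$. *)

theory Defs
  imports Complex_Main
begin

(* n x m real matrices are represented as functions nat => nat => real,
   indexed by rows 1..n and columns 1..m; values outside this range are irrelevant. *)

definition pdiff :: "(nat \<Rightarrow> nat \<Rightarrow> real) \<Rightarrow> nat \<Rightarrow> nat \<Rightarrow> nat \<Rightarrow> real" where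
  "pdiff C r c j = C r (max j c) - C r (min j c)"

end

theory Submission
  imports Defs
begin

theorem theorem2:
  fixes A1 C2 :: "nat \<Rightarrow> nat \<Rightarrow> real" and n m r c :: nat
  assumes "r \<in> {1..n}" and "c \<in> {1..m}"
    and "\<forall>j\<in>{1..m}. j < c \<longrightarrow> pdiff C2 r c j < 0"
    and "\<forall>j\<in>{1..m}. j > c \<longrightarrow> pdiff C2 r c j > 0"
  shows "\<exists>E \<phi> :: nat \<Rightarrow> nat \<Rightarrow> real. \<phi> r c = 0 \<and>
     (\<forall>\<gamma>\<in>{1..n}. \<forall>\<gamma>'\<in>{1..n}. \<forall>\<sigma>\<in>{1..m}. \<forall>\<sigma>'\<in>{1..m}.
        A1 \<gamma> \<sigma> + E \<gamma> \<sigma> - A1 \<gamma>' \<sigma> - E \<gamma>' \<sigma> = \<phi> \<gamma> \<sigma> - \<phi> \<gamma>' \<sigma> \<and>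
        C2 \<gamma> \<sigma> - C2 \<gamma> \<sigma>' = \<phi> \<gamma> \<sigma> - \<phi> \<gamma> \<sigma>') \<and>
     (\<forall>\<gamma>\<in>{1..n}. \<forall>\<sigma>\<in>{1..m}. (\<gamma>, \<sigma>) \<noteq> (r, c) \<longrightarrow> \<phi> \<gamma> \<sigma> > 0)"
proof -
  define M where "M = (\<lambda>\<gamma>. Min (C2 \<gamma> ` {1..m}))"
  define \<phi> where "\<phi> = (\<lambda>\<gamma> \<sigma>. if \<gamma> = r then C2 r \<sigma> - C2 r c else C2 \<gamma> \<sigma> - M \<gamma> + 1)"
  define E where "E = (\<lambda>\<gamma> \<sigma>. \<phi> \<gamma> \<sigma> - A1 \<gamma> \<sigma>)"
  have Mle: "M \<gamma> \<le> C2 \<gamma> \<sigma>" if "\<sigma> \<in> {1..m}" for \<gamma> \<sigma>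
    unfolding M_def using that by (intro Min_le) auto
  have pos: "\<phi> \<gamma> \<sigma> > 0" if "\<gamma> \<in> {1..n}" "\<sigma> \<in> {1..m}" "(\<gamma>, \<sigma>) \<noteq> (r, c)" for \<gamma> \<sigma>
  proof (cases "\<gamma> = r")
    case True
    then have "\<sigma> \<noteq> c" using that by auto
    then consider "\<sigma> < c" | "\<sigma> > c" by linarith
    then show ?thesis
    proof cases
      case 1
      then have "pdiff C2 r c \<sigma> < 0" using assms(3) that by auto
      then show ?thesis using 1 True unfolding pdiff_def \<phi>_def by (simp add: max_def min_def)
    next
      case 2
      then have "pdiff C2 r c \<sigma> > 0" using assms(4) that by auto
      then show ?thesis using 2 True unfolding pdiff_def \<phi>_def by (simp add: max_def min_def)
    qed
  next
    case False
    then show ?thesis using Mle[OF that(2), of \<gamma>] unfolding \<phi>_def by simp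
  qed
  have "\<phi> r c = 0" unfolding \<phi>_def by simp
  moreover have "\<forall>\<gamma>\<in>{1..n}. \<forall>\<gamma>'\<in>{1..n}. \<forall>\<sigma>\<in>{1..m}. \<forall>\<sigma>'\<in>{1..m}.
        A1 \<gamma> \<sigma> + E \<gamma> \<sigma> - A1 \<gamma>' \<sigma> - E \<gamma>' \<sigma> = \<phi> \<gamma> \<sigma> - \<phi> \<gamma>' \<sigma> \<and>
        C2 \<gamma> \<sigma> - C2 \<gamma> \<sigma>' = \<phi> \<gamma> \<sigma> - \<phi> \<gamma> \<sigma>'"
    unfolding E_def \<phi>_def by auto
  ultimately show ?thesis using pos by blast
qed

end
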